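(* Let $p\in[1,\infty]$, let $W^{(1)}\in\mathbb{R}^{n_1\times n_0}$, $W^{(2)}\in\mathbb{R}^{n_2\times n_1}$, and let $f:\mathbb{R}^{n_0}\to\mathbb{R}^{n_2}$ be the two-layer network $f(x)=W^{(2)}\sigma(W^{(1)}x)$, where $\sigma(z)=(\sigma_1(z_1),\dots,\sigma_{n_1}(z_{n_1}))$ and each $\sigma_i:\mathbb{R}\to\mathbb{R}$ is slope-restricted in $[\alpha_i,\beta_i]$ with $0\le \alpha_i\le\beta_i<\infty$. Let $\alpha=(\alpha_1,\dots,\alpha_{n_1})$, $\beta=(\beta_1,\dots,\beta_{n_1})$, let $d\in\mathbb{R}^{n_1}_{+}$ be any elementwise nonnegative vector and $D=\mathrm{diag}(d)$, so that $f(x)=W^{(2)}\big(\psi(W^{(1)}x;d)+DW^{(1)}x\big)$ with $\psi(z;d)=\sigma(z)-Dz$. Then $f$ is Lipschitz continuous with respect to the $\ell_p$ norm with constant $$L(d)=\|W^{(2)}\|_p\,\big\|\mathrm{diag}\big(\max(|\beta-d|,|d-\alpha|)\big)W^{(1)}\big\|_p+\|W^{(2)}DW^{(1)}\|_p,$$ where $\max$ and $|\cdot|$ are taken elementwise.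
   Context: A function $\sigma_i:\mathbb{R}\to\mathbb{R}$ is slope-restricted in $[\alpha_i,\beta_i]$ if $\alpha_i\le \frac{\sigma_i(x)-\sigma_i(y)}{x-y}\le\beta_i$ for all $x\neq y$. For a matrix $A$, $\|A\|_p=\sup_{\|x\|_p\le 1}\|Ax\|_p$ is the induced operator norm. A Lipschitz constant $L$ in $\ell_p$ means $\|f(x)-f(y)\|_p\le L\|x-y\|_p$ for all $x,y$. *)

theory Defs
  imports "HOL-Analysis.Analysis"
begin

definition lpnorm :: "ereal \<Rightarrow> real^'n \<Rightarrow> real" where
  "lpnorm p x = (if p = \<infinity> then Max (range (\<lambda>i. \<bar>x $ i\<bar>))
                 else (\<Sum>i\<in>UNIV. \<bar>x $ i\<bar> powr real_of_ereal p) powr (1 / real_of_ereal p))"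

definition opnorm_p :: "ereal \<Rightarrow> real^'m^'n \<Rightarrow> real" where
  "opnorm_p p A = Sup ((\<lambda>x. lpnorm p (A *v x)) ` {x. lpnorm p x \<le> 1})"

definition diag_mat :: "real^'n \<Rightarrow> real^'n^'n" where
  "diag_mat v = (\<chi> i j. if i = j then v $ i else 0)"

definition slope_restricted :: "(real \<Rightarrow> real) \<Rightarrow> real \<Rightarrow> real \<Rightarrow> bool" where
  "slope_restricted s a b \<longleftrightarrow> (\<forall>x y. x \<noteq> y \<longrightarrow> a \<le> (s x - s y) / (x - y) \<and> (s x - s y) / (x - y) \<le> b)"

end

theory Submission
  imports Defs
begin

lemma cvx_pt:
  fixes q u v t :: real
  assumes q: "1 \<le> q" and u: "0 \<le> u" and v: "0 \<le> v" and t: "0 \<le> t" "t \<le> 1"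
  shows "(t * u + (1 - t) * v) powr q \<le> t * u powr q + (1 - t) * v powr q"
proof -
  have aux: "(s * w) powr q \<le> s * w powr q" if "0 \<le> s" "s \<le> 1" "0 \<le> w" for s w :: real
  proof -
    have "s powr q \<le> s powr 1"
      using that q powr_mono'[of 1 q s] by (cases "s = 0") auto
    then have "s powr q \<le> s" using that by simp
    then show ?thesis using that by (simp add: powr_mult mult_right_mono)
  qed
  show ?thesis
  proof (cases "u = 0 \<or> v = 0")
    case True
    then show ?thesis
    proof
      assume "u = 0" then show ?thesis using aux[of "1 - t" v] t v q by simp
    next
      assume "v = 0" then show ?thesis using aux[of t u] t u q by simp
    qed
  next
    case False
    then have "u \<in> {0<..}" "v \<in> {0<..}" using u v by auto
    from convex_onD[OF powr_convex[OF q], of "1 - t" u v] t this show ?thesis by simp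
  qed
qed

definition lpq :: "real \<Rightarrow> real^'n \<Rightarrow> real" where
  "lpq q x = (\<Sum>i\<in>UNIV. \<bar>x $ i\<bar> powr q) powr (1 / q)"

lemma lpq_nonneg: "0 \<le> lpq q x" by (simp add: lpq_def)

lemma lpq_comp: assumes "1 \<le> q" shows "\<bar>x $ i\<bar> \<le> lpq q x"
proof -
  have "\<bar>x $ i\<bar> powr q \<le> (\<Sum>j\<in>UNIV. \<bar>x $ j\<bar> powr q)"
    by (rule member_le_sum) auto
  then have "(\<bar>x $ i\<bar> powr q) powr (1/q) \<le> (\<Sum>j\<in>UNIV. \<bar>x $ j\<bar> powr q) powr (1/q)"
    using assms by (intro powr_mono2) auto
  then show ?thesis using assms by (simp add: lpq_def powr_powr)
qed

lemma lpq_mono: assumes "1 \<le> q" "\<And>i. \<bar>u $ i\<bar> \<le> \<bar>v $ i\<bar>" shows "lpq q u \<le> lpq q v"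
  unfolding lpq_def using assms
  by (intro powr_mono2 sum_mono sum_nonneg) auto

lemma lpq_scale: assumes "1 \<le> q" shows "lpq q (c *\<^sub>R x) = \<bar>c\<bar> * lpq q x"
proof -
  have "(\<Sum>i\<in>UNIV. \<bar>(c *\<^sub>R x) $ i\<bar> powr q) = \<bar>c\<bar> powr q * (\<Sum>i\<in>UNIV. \<bar>x $ i\<bar> powr q)"
    by (simp add: sum_distrib_left abs_mult powr_mult)
  then have "lpq q (c *\<^sub>R x) = (\<bar>c\<bar> powr q) powr (1/q) * (\<Sum>i\<in>UNIV. \<bar>x $ i\<bar> powr q) powr (1/q)"
    by (simp add: lpq_def powr_mult sum_nonneg)
  also have "(\<bar>c\<bar> powr q) powr (1/q) = \<bar>c\<bar>" using assms by (simp add: powr_powr)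
  finally show ?thesis by (simp add: lpq_def)
qed

lemma lpq_zero: assumes "1 \<le> q" "lpq q x = 0" shows "x = 0"
proof -
  have "\<bar>x $ i\<bar> \<le> 0" for i using lpq_comp[OF assms(1), of x i] assms(2) by simp
  then show ?thesis by (simp add: vec_eq_iff)
qed

lemma lpq_0: "lpq q 0 = 0" by (simp add: lpq_def)

lemma lpq_le_sum: assumes q: "1 \<le> q" shows "lpq q x \<le> (\<Sum>i\<in>UNIV. \<bar>x $ i\<bar>)"
proof (cases "(\<Sum>i\<in>UNIV. \<bar>x $ i\<bar>) = 0")
  case True
  then have "\<forall>i\<in>UNIV. \<bar>x $ i\<bar> = 0" by (subst (asm) sum_nonneg_eq_0_iff) auto
  then show ?thesis by (simp add: lpq_def)
next
  case False
  define S where "S = (\<Sum>i\<in>UNIV. \<bar>x $ i\<bar>)"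
  have Spos: "S > 0" using False S_def by (metis order_le_neq_trans sum_nonneg abs_ge_zero)
  have le: "(\<bar>x $ i\<bar> / S) powr q \<le> \<bar>x $ i\<bar> / S" for i
  proof -
    have "\<bar>x $ i\<bar> \<le> S" unfolding S_def by (rule member_le_sum) auto
    then have "\<bar>x $ i\<bar> / S \<le> 1" using Spos by simp
    then have "(\<bar>x $ i\<bar> / S) powr q \<le> (\<bar>x $ i\<bar> / S) powr 1"
      using q Spos powr_mono'[of 1 q "\<bar>x $ i\<bar> / S"] by (cases "x $ i = 0") auto
    then show ?thesis using Spos by simp
  qed
  have "(\<Sum>i\<in>UNIV. \<bar>x $ i\<bar> powr q) = S powr q * (\<Sum>i\<in>UNIV. (\<bar>x $ i\<bar> / S) powr q)"
    using Spos by (simp add: sum_distrib_left powr_divide)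
  also have "\<dots> \<le> S powr q * (\<Sum>i\<in>UNIV. \<bar>x $ i\<bar> / S)"
    by (intro mult_left_mono sum_mono le) auto
  also have "(\<Sum>i\<in>UNIV. \<bar>x $ i\<bar> / S) = 1" using Spos by (simp add: sum_divide_distrib[symmetric] S_def)
  finally have "(\<Sum>i\<in>UNIV. \<bar>x $ i\<bar> powr q) powr (1/q) \<le> (S powr q) powr (1/q)"
    using q by (intro powr_mono2) (auto intro: sum_nonneg)
  then show ?thesis using q Spos by (simp add: lpq_def powr_powr S_def)
qed

lemma lpq_pow: assumes "1 \<le> q" shows "lpq q x powr q = (\<Sum>i\<in>UNIV. \<bar>x $ i\<bar> powr q)"
  using assms by (simp add: lpq_def powr_powr sum_nonneg)

lemma lpq_triangle: assumes q: "1 \<le> q" shows "lpq q (x + y) \<le> lpq q x + lpq q y"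
proof (cases "lpq q x = 0 \<or> lpq q y = 0")
  case True
  then show ?thesis
  proof
    assume "lpq q x = 0" then have "x = 0" using lpq_zero[OF q] by blast
    then show ?thesis by (simp add: lpq_0)
  next
    assume "lpq q y = 0" then have "y = 0" using lpq_zero[OF q] by blast
    then show ?thesis by (simp add: lpq_0)
  qed
next
  case False
  define a where "a = lpq q x"
  define b where "b = lpq q y"
  have a: "a > 0" and b: "b > 0" using False lpq_nonneg a_def b_def by (metis order_le_neq_trans)+
  define t where "t = a / (a + b)"
  have t: "0 \<le> t" "t \<le> 1" "1 - t = b / (a + b)" using a b by (auto simp: t_def field_simps)
  have sa: "(\<Sum>i\<in>UNIV. (\<bar>x $ i\<bar> / a) powr q) = 1"
  proof -
    have "(\<Sum>i\<in>UNIV. (\<bar>x $ i\<bar> / a) powr q) = (\<Sum>i\<in>UNIV. \<bar>x $ i\<bar> powr q) / a powr q"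
      using a by (simp add: powr_divide sum_divide_distrib)
    also have "\<dots> = a powr q / a powr q" using lpq_pow[OF q, of x] a_def by simp
    finally show ?thesis using a by simp
  qed
  have sb: "(\<Sum>i\<in>UNIV. (\<bar>y $ i\<bar> / b) powr q) = 1"
  proof -
    have "(\<Sum>i\<in>UNIV. (\<bar>y $ i\<bar> / b) powr q) = (\<Sum>i\<in>UNIV. \<bar>y $ i\<bar> powr q) / b powr q"
      using b by (simp add: powr_divide sum_divide_distrib)
    also have "\<dots> = b powr q / b powr q" using lpq_pow[OF q, of y] b_def by simp
    finally show ?thesis using b by simp
  qed
  have pt: "\<bar>(x + y) $ i\<bar> powr q \<le> (a + b) powr q * (t * (\<bar>x $ i\<bar> / a) powr q + (1 - t) * (\<bar>y $ i\<bar> / b) powr q)" for i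
  proof -
    have e: "\<bar>x $ i\<bar> + \<bar>y $ i\<bar> = (a + b) * (t * (\<bar>x $ i\<bar> / a) + (1 - t) * (\<bar>y $ i\<bar> / b))"
    proof -
      have h1: "(a + b) * t = a" and h2: "(a + b) * (1 - t) = b" using a b t(3) by (auto simp: t_def)
      have "(a + b) * (t * (\<bar>x $ i\<bar> / a) + (1 - t) * (\<bar>y $ i\<bar> / b))
          = ((a + b) * t) * (\<bar>x $ i\<bar> / a) + ((a + b) * (1 - t)) * (\<bar>y $ i\<bar> / b)"
        by (simp only: distrib_left mult.assoc)
      also have "\<dots> = \<bar>x $ i\<bar> + \<bar>y $ i\<bar>" using a b by (simp add: h1 h2)
      finally show ?thesis by simp
    qed
    have "\<bar>(x + y) $ i\<bar> powr q \<le> (\<bar>x $ i\<bar> + \<bar>y $ i\<bar>) powr q"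
      using q by (intro powr_mono2) (auto simp: abs_triangle_ineq)
    also have "\<dots> = (a + b) powr q * (t * (\<bar>x $ i\<bar> / a) + (1 - t) * (\<bar>y $ i\<bar> / b)) powr q"
      using a b t by (simp add: e powr_mult)
    also have "\<dots> \<le> (a + b) powr q * (t * (\<bar>x $ i\<bar> / a) powr q + (1 - t) * (\<bar>y $ i\<bar> / b) powr q)"
      using a b t q by (intro mult_left_mono cvx_pt) auto
    finally show ?thesis .
  qed
  have "(\<Sum>i\<in>UNIV. \<bar>(x + y) $ i\<bar> powr q) \<le> (\<Sum>i\<in>UNIV. (a + b) powr q * (t * (\<bar>x $ i\<bar> / a) powr q + (1 - t) * (\<bar>y $ i\<bar> / b) powr q))"
    by (intro sum_mono pt)
  also have "\<dots> = (a + b) powr q * (t * (\<Sum>i\<in>UNIV. (\<bar>x $ i\<bar> / a) powr q) + (1 - t) * (\<Sum>i\<in>UNIV. (\<bar>y $ i\<bar> / b) powr q))"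
    by (simp add: sum_distrib_left[symmetric] sum.distrib)
  also have "\<dots> = (a + b) powr q" by (simp add: sa sb)
  finally have "(\<Sum>i\<in>UNIV. \<bar>(x + y) $ i\<bar> powr q) powr (1/q) \<le> ((a + b) powr q) powr (1/q)"
    using q by (intro powr_mono2) (auto intro: sum_nonneg)
  then show ?thesis using q a b by (simp add: lpq_def[of q "x + y"] powr_powr a_def b_def)
qed


definition lpinf :: "real^'n \<Rightarrow> real" where
  "lpinf x = Max (range (\<lambda>i. \<bar>x $ i\<bar>))"

lemma lpinf_comp: "\<bar>x $ i\<bar> \<le> lpinf x"
  unfolding lpinf_def by (rule Max_ge) auto

lemma lpinf_le: "(\<And>i. \<bar>x $ i\<bar> \<le> c) \<Longrightarrow> lpinf x \<le> c"
  unfolding lpinf_def by (subst Max_le_iff) auto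

lemma lpinf_attained: "\<exists>i. lpinf x = \<bar>x $ i\<bar>"
proof -
  have "lpinf x \<in> range (\<lambda>i. \<bar>x $ i\<bar>)" unfolding lpinf_def by (rule Max_in) auto
  then show ?thesis by auto
qed

lemma lp_cases:
  assumes "1 \<le> p"
  shows "lpnorm p = lpinf \<or> (\<exists>q. 1 \<le> q \<and> lpnorm p = lpq q)"
proof (cases "p = \<infinity>")
  case True then show ?thesis by (auto simp: lpnorm_def lpinf_def fun_eq_iff)
next
  case False
  then obtain q where "p = ereal q" using assms by (cases p) auto
  then show ?thesis using assms by (auto simp: lpnorm_def lpq_def fun_eq_iff)
qed

lemma lp_nonneg: "1 \<le> p \<Longrightarrow> 0 \<le> lpnorm p x"
  using lp_cases[of p] lpq_nonneg order_trans[OF abs_ge_zero lpinf_comp] by metis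

lemma lp_comp: "1 \<le> p \<Longrightarrow> \<bar>x $ i\<bar> \<le> lpnorm p x"
  using lp_cases[of p] lpq_comp lpinf_comp by metis

lemma lp_mono: fixes u v :: "real^'n" assumes "1 \<le> p" "\<And>i. \<bar>u $ i\<bar> \<le> \<bar>v $ i\<bar>" shows "lpnorm p u \<le> lpnorm p v"
  using lp_cases[OF assms(1)]
proof
  assume e: "lpnorm p = (lpinf :: real^'n \<Rightarrow> real)"
  show ?thesis unfolding e by (rule lpinf_le) (metis assms(2) lpinf_comp order_trans)
next
  assume "\<exists>q. 1 \<le> q \<and> lpnorm p = (lpq q :: real^'n \<Rightarrow> real)"
  then show ?thesis using lpq_mono assms(2) by metis
qed

lemma lp_scale: fixes x :: "real^'n" assumes "1 \<le> p" shows "lpnorm p (c *\<^sub>R x) = \<bar>c\<bar> * lpnorm p x"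
  using lp_cases[OF assms(1)]
proof
  assume e: "lpnorm p = (lpinf :: real^'n \<Rightarrow> real)"
  show ?thesis unfolding e
  proof (rule antisym)
    show "lpinf (c *\<^sub>R x) \<le> \<bar>c\<bar> * lpinf x"
      by (rule lpinf_le) (auto simp: abs_mult intro: mult_left_mono lpinf_comp)
    obtain i where "lpinf x = \<bar>x $ i\<bar>" using lpinf_attained by blast
    then show "\<bar>c\<bar> * lpinf x \<le> lpinf (c *\<^sub>R x)"
      using lpinf_comp[of "c *\<^sub>R x" i] by (simp add: abs_mult)
  qed
next
  assume "\<exists>q. 1 \<le> q \<and> lpnorm p = (lpq q :: real^'n \<Rightarrow> real)"
  then show ?thesis using lpq_scale by metis
qed

lemma lp_zero: assumes "1 \<le> p" "lpnorm p x = 0" shows "x = 0"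
proof -
  have "\<bar>x $ i\<bar> \<le> 0" for i using lp_comp[OF assms(1), of x i] assms(2) by simp
  then show ?thesis by (simp add: vec_eq_iff)
qed

lemma lp_0: "1 \<le> p \<Longrightarrow> lpnorm p 0 = 0"
  using lp_scale[of p 0 0] by simp

lemma lp_le_sum: fixes x :: "real^'n" assumes "1 \<le> p" shows "lpnorm p x \<le> (\<Sum>i\<in>UNIV. \<bar>x $ i\<bar>)"
  using lp_cases[OF assms(1)]
proof
  assume e: "lpnorm p = (lpinf :: real^'n \<Rightarrow> real)"
  show ?thesis unfolding e by (rule lpinf_le, rule member_le_sum) auto
next
  assume "\<exists>q. 1 \<le> q \<and> lpnorm p = (lpq q :: real^'n \<Rightarrow> real)"
  then show ?thesis using lpq_le_sum by metis
qed

lemma lp_triangle: fixes x y :: "real^'n" assumes "1 \<le> p" shows "lpnorm p (x + y) \<le> lpnorm p x + lpnorm p y"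
  using lp_cases[OF assms(1)]
proof
  assume e: "lpnorm p = (lpinf :: real^'n \<Rightarrow> real)"
  show ?thesis unfolding e
    by (rule lpinf_le) (metis add_mono abs_triangle_ineq order_trans lpinf_comp vector_add_component)
next
  assume "\<exists>q. 1 \<le> q \<and> lpnorm p = (lpq q :: real^'n \<Rightarrow> real)"
  then show ?thesis using lpq_triangle by metis
qed

lemma lp_bdd: assumes "1 \<le> p"
  shows "lpnorm p (A *v x) \<le> (\<Sum>i\<in>UNIV. \<Sum>j\<in>UNIV. \<bar>A $ i $ j\<bar>) * lpnorm p x"
proof -
  have "lpnorm p (A *v x) \<le> (\<Sum>i\<in>UNIV. \<bar>(A *v x) $ i\<bar>)" by (rule lp_le_sum[OF assms])
  also have "\<dots> \<le> (\<Sum>i\<in>UNIV. \<Sum>j\<in>UNIV. \<bar>A $ i $ j\<bar> * lpnorm p x)"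
  proof (rule sum_mono)
    fix i
    have "\<bar>(A *v x) $ i\<bar> = \<bar>\<Sum>j\<in>UNIV. A $ i $ j * x $ j\<bar>" by (simp add: matrix_vector_mult_def)
    also have "\<dots> \<le> (\<Sum>j\<in>UNIV. \<bar>A $ i $ j * x $ j\<bar>)" by (rule sum_abs)
    also have "\<dots> \<le> (\<Sum>j\<in>UNIV. \<bar>A $ i $ j\<bar> * lpnorm p x)"
      by (rule sum_mono) (simp add: abs_mult mult_left_mono lp_comp[OF assms])
    finally show "\<bar>(A *v x) $ i\<bar> \<le> (\<Sum>j\<in>UNIV. \<bar>A $ i $ j\<bar> * lpnorm p x)" .
  qed
  also have "\<dots> = (\<Sum>i\<in>UNIV. \<Sum>j\<in>UNIV. \<bar>A $ i $ j\<bar>) * lpnorm p x"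
    by (simp add: sum_distrib_right)
  finally show ?thesis .
qed

lemma op_bdd: fixes A :: "real^'m^'n" assumes "1 \<le> p"
  shows "bdd_above ((\<lambda>x. lpnorm p (A *v x)) ` {x. lpnorm p x \<le> 1})"
proof (rule bdd_aboveI2)
  fix x :: "real^'m" assume "x \<in> {x. lpnorm p x \<le> 1}"
  then have "lpnorm p x \<le> 1" by simp
  then show "lpnorm p (A *v x) \<le> (\<Sum>i\<in>UNIV. \<Sum>j\<in>UNIV. \<bar>A $ i $ j\<bar>)"
    using lp_bdd[OF assms, of A x] 
    by (meson order_trans mult_left_le sum_nonneg abs_ge_zero lp_nonneg[OF assms])
qed

lemma op_nonneg: fixes A :: "real^'m^'n" assumes "1 \<le> p" shows "0 \<le> opnorm_p p A"
proof -
  have "lpnorm p (A *v 0) \<le> opnorm_p p A" unfolding opnorm_p_def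
    by (rule cSup_upper[OF _ op_bdd[OF assms]], rule imageI) (simp add: lp_0[OF assms])
  then show ?thesis by (simp add: lp_0[OF assms])
qed

lemma op_le: fixes A :: "real^'m^'n" and x :: "real^'m" assumes "1 \<le> p" shows "lpnorm p (A *v x) \<le> opnorm_p p A * lpnorm p x"
proof (cases "lpnorm p x = 0")
  case True
  then have "x = 0" using lp_zero[OF assms] by blast
  then show ?thesis using True by (simp add: lp_0[OF assms])
next
  case False
  define n where "n = lpnorm p x"
  have n: "n > 0" using False lp_nonneg[OF assms] n_def by (metis order_le_neq_trans)
  have "lpnorm p ((1/n) *\<^sub>R x) = 1" using n by (simp add: lp_scale[OF assms] n_def)
  then have "lpnorm p (A *v ((1/n) *\<^sub>R x)) \<le> opnorm_p p A" unfolding opnorm_p_def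
    by (intro cSup_upper[OF _ op_bdd[OF assms]]) auto
  then have "(1/n) * lpnorm p (A *v x) \<le> opnorm_p p A"
    using n by (simp add: matrix_vector_mult_scaleR lp_scale[OF assms])
  then show ?thesis using n by (simp add: n_def field_simps)
qed

theorem lemma1:
  fixes p :: ereal
    and W1 :: "real^'n0^'n1" and W2 :: "real^'n1^'n2"
    and \<sigma> :: "'n1 \<Rightarrow> real \<Rightarrow> real"
    and \<alpha> \<beta> d :: "real^'n1"
    and f :: "real^'n0 \<Rightarrow> real^'n2"
  assumes p: "1 \<le> p"
    and slope: "\<forall>i. slope_restricted (\<sigma> i) (\<alpha> $ i) (\<beta> $ i)"
    and alpha_nonneg: "\<forall>i. 0 \<le> \<alpha> $ i"
    and alpha_le_beta: "\<forall>i. \<alpha> $ i \<le> \<beta> $ i"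
    and d_nonneg: "\<forall>i. 0 \<le> d $ i"
    and f_def: "\<forall>x. f x = W2 *v (\<chi> i. \<sigma> i ((W1 *v x) $ i))"
  shows "\<forall>x y. lpnorm p (f x - f y) \<le>
           (opnorm_p p W2 * opnorm_p p (diag_mat (\<chi> i. max \<bar>\<beta> $ i - d $ i\<bar> \<bar>d $ i - \<alpha> $ i\<bar>) ** W1)
            + opnorm_p p (W2 ** diag_mat d ** W1)) * lpnorm p (x - y)"
  proof (intro allI)
  fix x y :: "real^'n0"
  have p1: "1 \<le> p" by (rule p)
  define h where "h = x - y"
  define z where "z = W1 *v x"
  define w where "w = W1 *v y"
  define m where "m = (\<chi> i. max \<bar>\<beta> $ i - d $ i\<bar> \<bar>d $ i - \<alpha> $ i\<bar>)"
  define s where "s i = (if z $ i = w $ i then \<alpha> $ i else (\<sigma> i (z $ i) - \<sigma> i (w $ i)) / (z $ i - w $ i))" for i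
  have hz: "(W1 *v h) $ i = z $ i - w $ i" for i
    by (simp add: h_def z_def w_def matrix_vector_mult_diff_distrib)
  have sd: "\<sigma> i (z $ i) - \<sigma> i (w $ i) = s i * (z $ i - w $ i)" for i
    by (cases "z $ i = w $ i") (auto simp: s_def)
  have srange: "\<alpha> $ i \<le> s i \<and> s i \<le> \<beta> $ i" for i
  proof (cases "z $ i = w $ i")
    case True then show ?thesis using alpha_le_beta by (simp add: s_def)
  next
    case False then show ?thesis using slope unfolding slope_restricted_def s_def by auto
  qed
  have sm: "\<bar>s i - d $ i\<bar> \<le> m $ i" for i
    using srange[of i] by (auto simp: m_def abs_if)
  have m0: "0 \<le> m $ i" for i by (simp add: m_def)
  define u where "u = (\<chi> i. (s i - d $ i) * (W1 *v h) $ i)"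
  have diag_mv: "diag_mat v *v a = (\<chi> i. v $ i * a $ i)" for v a :: "real^'n1"
    unfolding diag_mat_def matrix_vector_mult_def vec_eq_iff
    by (simp add: if_distrib[where f="\<lambda>c. c * _"] sum.delta cong: if_cong)
  have split: "f x - f y = W2 *v u + (W2 ** diag_mat d ** W1) *v h"
  proof -
    have "(\<chi> i. \<sigma> i (z $ i)) - (\<chi> i. \<sigma> i (w $ i)) = u + diag_mat d *v (W1 *v h)"
      by (simp add: vec_eq_iff u_def diag_mv sd hz algebra_simps)
    then have "f x - f y = W2 *v (u + diag_mat d *v (W1 *v h))"
      by (simp add: f_def z_def w_def matrix_vector_mult_diff_distrib[symmetric])
    then show ?thesis by (simp add: matrix_vector_right_distrib matrix_vector_mul_assoc matrix_mul_assoc)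
  qed
  have ule: "lpnorm p u \<le> lpnorm p ((diag_mat m ** W1) *v h)"
  proof (rule lp_mono[OF p1])
    fix i
    have "\<bar>u $ i\<bar> = \<bar>s i - d $ i\<bar> * \<bar>(W1 *v h) $ i\<bar>" by (simp add: u_def abs_mult)
    also have "\<dots> \<le> m $ i * \<bar>(W1 *v h) $ i\<bar>" by (intro mult_right_mono sm) auto
    also have "\<dots> = \<bar>((diag_mat m ** W1) *v h) $ i\<bar>"
      by (simp add: matrix_vector_mul_assoc[symmetric] diag_mv abs_mult m0)
    finally show "\<bar>u $ i\<bar> \<le> \<bar>((diag_mat m ** W1) *v h) $ i\<bar>" .
  qed
  have "lpnorm p (f x - f y) \<le> lpnorm p (W2 *v u) + lpnorm p ((W2 ** diag_mat d ** W1) *v h)"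
    unfolding split by (rule lp_triangle[OF p1])
  also have "\<dots> \<le> opnorm_p p W2 * lpnorm p u + opnorm_p p (W2 ** diag_mat d ** W1) * lpnorm p h"
    by (intro add_mono op_le[OF p1])
  also have "\<dots> \<le> opnorm_p p W2 * (opnorm_p p (diag_mat m ** W1) * lpnorm p h) + opnorm_p p (W2 ** diag_mat d ** W1) * lpnorm p h"
    by (intro add_mono mult_left_mono order_trans[OF ule op_le[OF p1]] op_nonneg[OF p1] order_refl)
  also have "\<dots> = (opnorm_p p W2 * opnorm_p p (diag_mat m ** W1) + opnorm_p p (W2 ** diag_mat d ** W1)) * lpnorm p h"
    by (simp add: algebra_simps)
  finally show "lpnorm p (f x - f y) \<le> (opnorm_p p W2 * opnorm_p p (diag_mat (\<chi> i. max \<bar>\<beta> $ i - d $ i\<bar> \<bar>d $ i - \<alpha> $ i\<bar>) ** W1)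
            + opnorm_p p (W2 ** diag_mat d ** W1)) * lpnorm p (x - y)"
    by (simp add: m_def h_def)
qed

end
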